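(* Let $\mathscr{N}$, $\mathscr{E}$ be closed smooth Riemannian manifolds, $\Pi\colon\mathscr{E}\to\mathscr{N}$ a smooth double covering, and $\Phi\colon\mathscr{E}\to\mathscr{E}$ the map sending $z$ to the unique $y\neq z$ with $\Pi(y)=\Pi(z)$. There exists a Lipschitz function $\Xi\colon\mathscr{E}\times\mathscr{E}\to\mathbb{R}$ such that for all $z_1,z_2\in\mathscr{E}$: $\Xi(z_1,z_2)=1$ if and only if $z_1=z_2$; $\Xi(z_1,z_2)=-1$ if and only if $z_1=\Phi(z_2)$; and $\Xi(z_1,z_2)=\Xi(\Phi(z_1),\Phi(z_2))$.
   Context: A smooth map $\Pi\colon\mathscr{E}\to\mathscr{N}$ is a double covering if every $w\in\mathscr{N}$ has an open neighbourhood $V$ with $\Pi^{-1}(V)=U_1\cup U_2$, $U_1,U_2$ disjoint open sets on which $\Pi$ restricts to isometric diffeomorphisms onto $V$. Then $\Phi$ is a well-defined isometric involutive diffeomorphism. *)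

theory Defs
  imports "HOL-Analysis.Analysis"
begin

text \<open>A map between metric spaces restricted to an open set U is an
 isometric diffeomorphism onto V: here rendered (no smooth structure available)
 as a homeomorphism from U onto V that is a local isometry (locally distance
 preserving), which is what a Riemannian isometry between open sets gives for
 the induced distance functions.\<close>
definition isometric_onto :: "('a::metric_space \<Rightarrow> 'b::metric_space) \<Rightarrow> 'a set \<Rightarrow> 'b set \<Rightarrow> bool" where
  "isometric_onto f U V \<longleftrightarrow>
     (\<exists>g. homeomorphism U V f g) \<and>
     (\<forall>x\<in>U. \<exists>e>0. \<forall>y\<in>ball x e \<inter> U. \<forall>z\<in>ball x e \<inter> U. dist (f y) (f z) = dist y z)"

definition double_covering :: "('a::metric_space \<Rightarrow> 'b::metric_space) \<Rightarrow> bool" where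
  "double_covering P \<longleftrightarrow>
     (\<forall>w. \<exists>V. open V \<and> w \<in> V \<and>
        (\<exists>U1 U2. open U1 \<and> open U2 \<and> U1 \<inter> U2 = {} \<and> P -` V = U1 \<union> U2 \<and>
                 isometric_onto P U1 V \<and> isometric_onto P U2 V))"

end

theory Submission
  imports Defs
begin

lemma hom_inj:
  assumes "homeomorphism U V f g" "y \<in> U" "z \<in> U" "f y = f z"
  shows "y = z"
  using assms unfolding homeomorphism_def by metis

lemma fiber:
  fixes Pi :: "'e::metric_space \<Rightarrow> 'n::metric_space"
  assumes dc: "double_covering Pi"
    and ph: "\<And>z. Phi z \<noteq> z \<and> Pi (Phi z) = Pi z"
    and eq: "Pi y = Pi z"
  shows "y = z \<or> y = Phi z"
proof -
  obtain V U1 U2 where V: "open V" "Pi z \<in> V" "open U1" "open U2" "U1 \<inter> U2 = {}"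
    "Pi -` V = U1 \<union> U2" "isometric_onto Pi U1 V" "isometric_onto Pi U2 V"
    using dc unfolding double_covering_def by meson
  obtain g1 where g1: "homeomorphism U1 V Pi g1" using V(7) unfolding isometric_onto_def by blast
  obtain g2 where g2: "homeomorphism U2 V Pi g2" using V(8) unfolding isometric_onto_def by blast
  have "z \<in> U1 \<union> U2" "y \<in> U1 \<union> U2" "Phi z \<in> U1 \<union> U2"
    using V(2,6) eq ph[of z] by (metis vimageI2)+
  then show ?thesis using hom_inj[OF g1] hom_inj[OF g2] eq ph[of z] by (metis Un_iff)
qed

lemma invol:
  fixes Pi :: "'e::metric_space \<Rightarrow> 'n::metric_space"
  assumes dc: "double_covering Pi"
    and ph: "\<And>z. Phi z \<noteq> z \<and> Pi (Phi z) = Pi z"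
  shows "Phi (Phi z) = z"
  using fiber[OF dc ph, of "Phi (Phi z)" z] ph[of z] ph[of "Phi z"] by metis

lemma local_aux:
  fixes Pi :: "'e::metric_space \<Rightarrow> 'n::metric_space"
  assumes ph: "\<And>z. Phi z \<noteq> z \<and> Pi (Phi z) = Pi z"
    and V: "open V" "open U1" "open U2" "U1 \<inter> U2 = {}"
    "Pi -` V = U1 \<union> U2" "isometric_onto Pi U1 V" "isometric_onto Pi U2 V"
    and x: "x \<in> U1"
  shows "\<exists>W. open W \<and> x \<in> W \<and> (\<forall>y\<in>W. Phi y \<notin> W) \<and>
           (\<forall>y\<in>W. \<forall>z\<in>W. dist (Phi y) (Phi z) = dist y z)"
proof -
  obtain g1 where g1: "homeomorphism U1 V Pi g1" using V(6) unfolding isometric_onto_def by blast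
  obtain g2 where g2: "homeomorphism U2 V Pi g2" using V(7) unfolding isometric_onto_def by blast
  have PhiU2: "Phi y \<in> U2" if "y \<in> U1" for y
  proof -
    have "Phi y \<in> U1 \<union> U2" using V(5) ph[of y] that by (metis UnI1 vimageE vimageI2)
    moreover have "Phi y \<notin> U1" using hom_inj[OF g1, of "Phi y" y] ph[of y] that by metis
    ultimately show ?thesis by blast
  qed
  obtain e1 where e1: "e1 > 0" "\<forall>y\<in>ball x e1 \<inter> U1. \<forall>z\<in>ball x e1 \<inter> U1. dist (Pi y) (Pi z) = dist y z"
    using V(6) x unfolding isometric_onto_def by blast
  obtain e2 where e2: "e2 > 0" "\<forall>y\<in>ball (Phi x) e2 \<inter> U2. \<forall>z\<in>ball (Phi x) e2 \<inter> U2. dist (Pi y) (Pi z) = dist y z"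
    using V(7) PhiU2[OF x] unfolding isometric_onto_def by blast
  have PhiEq: "Phi y = g2 (Pi y)" if "y \<in> U1" for y
    using g2 PhiU2[OF that] ph[of y] unfolding homeomorphism_def by metis
  have "continuous_on U1 (g2 \<circ> Pi)"
  proof (rule continuous_on_compose)
    show "continuous_on U1 Pi" using g1 unfolding homeomorphism_def by blast
    have "Pi ` U1 \<subseteq> V" using g1 unfolding homeomorphism_def by blast
    moreover have "continuous_on V g2" using g2 unfolding homeomorphism_def by blast
    ultimately show "continuous_on (Pi ` U1) g2" using continuous_on_subset by metis
  qed
  then have "continuous_on U1 Phi" using PhiEq by (simp add: continuous_on_eq)
  then have "continuous (at x) Phi" using V(2) x continuous_on_eq_continuous_at by blast
  then obtain e3 where e3: "e3 > 0" "\<forall>y. dist y x < e3 \<longrightarrow> dist (Phi y) (Phi x) < e2"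
    using e2(1) unfolding continuous_at_eps_delta by blast
  obtain e4 where e4: "e4 > 0" "ball x e4 \<subseteq> U1" using V(2) x open_contains_ball by blast
  define e where "e = min e1 (min e3 e4)"
  have ep: "e > 0" using e1 e3 e4 by (simp add: e_def)
  have bU: "ball x e \<subseteq> U1" using e4 by (auto simp: e_def)
  show ?thesis
  proof (intro exI conjI ballI)
    show "open (ball x e)" by simp
    show "x \<in> ball x e" using ep by simp
    fix y assume y: "y \<in> ball x e"
    show "Phi y \<notin> ball x e" using PhiU2 bU y V(4) by blast
    fix z assume z: "z \<in> ball x e"
    have yz: "y \<in> U1" "z \<in> U1" using bU y z by auto
    have "Phi y \<in> ball (Phi x) e2 \<inter> U2" "Phi z \<in> ball (Phi x) e2 \<inter> U2"
      using e3 y z PhiU2 yz by (auto simp: e_def dist_commute)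
    then have "dist (Phi y) (Phi z) = dist (Pi (Phi y)) (Pi (Phi z))" using e2 by metis
    also have "\<dots> = dist (Pi y) (Pi z)" using ph by metis
    also have "\<dots> = dist y z" using e1 y z yz by (auto simp: e_def)
    finally show "dist (Phi y) (Phi z) = dist y z" .
  qed
qed

lemma local_good:
  fixes Pi :: "'e::metric_space \<Rightarrow> 'n::metric_space"
  assumes dc: "double_covering Pi"
    and ph: "\<And>z. Phi z \<noteq> z \<and> Pi (Phi z) = Pi z"
  shows "\<exists>W. open W \<and> x \<in> W \<and> (\<forall>y\<in>W. Phi y \<notin> W) \<and>
           (\<forall>y\<in>W. \<forall>z\<in>W. dist (Phi y) (Phi z) = dist y z)"
proof -
  obtain V U1 U2 where V: "open V" "Pi x \<in> V" "open U1" "open U2" "U1 \<inter> U2 = {}"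
    "Pi -` V = U1 \<union> U2" "isometric_onto Pi U1 V" "isometric_onto Pi U2 V"
    using dc unfolding double_covering_def by meson
  have "x \<in> U1 \<union> U2" using V by blast
  then show ?thesis
  proof
    assume "x \<in> U1" then show ?thesis using local_aux[OF ph V(1,3,4,5,6,7,8)] by blast
  next
    assume x2: "x \<in> U2"
    have a: "U2 \<inter> U1 = {}" using V(5) by blast
    have b: "Pi -` V = U2 \<union> U1" using V(6) by blast
    show ?thesis by (rule local_aux[OF ph V(1) V(4) V(3) a b V(8) V(7) x2])
  qed
qed

lemma clip_lip:
  fixes s t d :: real
  assumes "d > 0"
  shows "\<bar>max 0 (1 - s / d) - max 0 (1 - t / d)\<bar> \<le> \<bar>s - t\<bar> / d"
proof -
  have "(1 - s / d) - (1 - t / d) = (t - s) / d" using assms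
    by (simp add: field_simps)
  then have "\<bar>(1 - s / d) - (1 - t / d)\<bar> = \<bar>s - t\<bar> / d" using assms
    by (simp add: abs_minus_commute)
  then show ?thesis by (smt (verit))
qed

theorem lemma1p1:
  fixes Pi :: "'e::metric_space \<Rightarrow> 'n::metric_space"
    and Phi :: "'e \<Rightarrow> 'e"
  assumes "compact (UNIV :: 'e set)"
    and "compact (UNIV :: 'n set)"
    and "double_covering Pi"
    and "\<And>z. Phi z \<noteq> z \<and> Pi (Phi z) = Pi z"
  shows "\<exists>Xi :: 'e \<times> 'e \<Rightarrow> real. (\<exists>C. C-lipschitz_on UNIV Xi) \<and>
           (\<forall>z1 z2. (Xi (z1, z2) = 1 \<longleftrightarrow> z1 = z2) \<and>
                    (Xi (z1, z2) = -1 \<longleftrightarrow> z1 = Phi z2) \<and>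
                    Xi (z1, z2) = Xi (Phi z1, Phi z2))"
proof -
  define G where "G = {W. open W \<and> (\<forall>y\<in>W. Phi y \<notin> W) \<and>
           (\<forall>y\<in>W. \<forall>z\<in>W. dist (Phi y) (Phi z) = dist y z)}"
  have cov: "UNIV \<subseteq> \<Union>G"
  proof
    fix x :: 'e
    obtain W where W: "open W" "x \<in> W" "\<forall>y\<in>W. Phi y \<notin> W"
      "\<forall>y\<in>W. \<forall>z\<in>W. dist (Phi y) (Phi z) = dist y z"
      using local_good[OF assms(3,4), of x] by blast
    have "W \<in> G" unfolding G_def using W(1,3,4) by simp
    then show "x \<in> \<Union>G" using W(2) by (rule UnionI)
  qed
  have opn: "open W" if "W \<in> G" for W using that by (simp add: G_def)
  obtain d where d0: "d > 0" and dW: "\<And>x. x \<in> UNIV \<Longrightarrow> \<exists>W\<in>G. ball x d \<subseteq> W"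
    using Heine_Borel_lemma[OF assms(1) cov opn] by metis
  have d: "d > 0" "\<And>x. \<exists>W\<in>G. ball x d \<subseteq> W" using d0 dW by auto
  have inv: "Phi (Phi z) = z" for z using invol[OF assms(3,4)] .
  have iso: "dist (Phi y) (Phi z) = dist y z" if "dist y z < d" for y z
  proof -
    obtain W where W: "W \<in> G" "ball z d \<subseteq> W" using d by blast
    have P: "\<forall>y\<in>W. \<forall>z\<in>W. dist (Phi y) (Phi z) = dist y z" using W(1) by (simp add: G_def)
    have "y \<in> W" "z \<in> W" using that d W(2) by (auto simp: dist_commute)
    then show ?thesis using P by blast
  qed
  have far: "dist z (Phi z) \<ge> d" for z
  proof (rule ccontr)
    assume nf: "\<not> ?thesis"
    obtain W where W: "W \<in> G" "ball z d \<subseteq> W" using d by blast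
    have P: "\<forall>y\<in>W. Phi y \<notin> W" using W(1) by (simp add: G_def)
    have "Phi z \<in> W" "z \<in> W" using nf d W(2) by auto
    then show False using P by blast
  qed
  define f where "f t = max 0 (1 - t / d)" for t
  define Xi where "Xi p = f (dist (fst p) (snd p)) - f (dist (fst p) (Phi (snd p)))" for p
  have f01: "0 \<le> f t" "f t \<le> 1" if "t \<ge> 0" for t using that d0 by (auto simp: f_def)
  have f1: "f t = 1 \<longleftrightarrow> t = 0" if "t \<ge> 0" for t
    using that d0 by (auto simp: f_def max_def split: if_splits)
  have f0: "f t = 0" if "t \<ge> d" for t using that d0 by (auto simp: f_def)
  have finv: "f (dist (Phi y) (Phi z)) = f (dist y z)" for y z
  proof (cases "dist y z < d")
    case True then show ?thesis using iso by simp
  next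
    case False
    then have "\<not> dist (Phi y) (Phi z) < d" using iso[of "Phi y" "Phi z"] inv by metis
    then show ?thesis using False f0 by simp
  qed
  have lip: "(6 / d)-lipschitz_on UNIV Xi"
  proof (rule lipschitz_onI)
    show "0 \<le> 6 / d" using d by simp
    fix p q :: "'e \<times> 'e"
    obtain z1 z2 w1 w2 where pq: "p = (z1, z2)" "q = (w1, w2)" by (cases p, cases q)
    have b1: "\<bar>Xi r\<bar> \<le> 1" for r
      using f01[OF zero_le_dist[of "fst r" "snd r"]] f01[OF zero_le_dist[of "fst r" "Phi (snd r)"]]
      unfolding Xi_def by linarith
    show "dist (Xi p) (Xi q) \<le> 6 / d * dist p q"
    proof (cases "dist p q < d")
      case False
      have "dist (Xi p) (Xi q) \<le> 2" using b1[of p] b1[of q] unfolding dist_real_def by linarith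
      also have "2 \<le> 6 / d * dist p q" using False d by (simp add: field_simps)
      finally show ?thesis .
    next
      case True
      have d1: "dist z1 w1 \<le> dist p q" using dist_fst_le[of p q] pq by simp
      have d2: "dist z2 w2 \<le> dist p q" using dist_snd_le[of p q] pq by simp
      have d2': "dist (Phi z2) (Phi w2) \<le> dist p q" using iso[of z2 w2] d2 True by simp
      have a: "\<bar>dist z1 z2 - dist w1 w2\<bar> \<le> 2 * dist p q"
        using d1 d2 dist_triangle[of z1 z2 w1] dist_triangle[of w1 z2 w2] dist_commute[of z1 w1]
          dist_triangle[of w1 w2 z1] dist_triangle[of z1 w2 z2] dist_commute[of z2 w2]
        by linarith
      have b: "\<bar>dist z1 (Phi z2) - dist w1 (Phi w2)\<bar> \<le> 2 * dist p q"
        using d1 d2' dist_triangle[of z1 "Phi z2" w1] dist_triangle[of w1 "Phi z2" "Phi w2"] dist_commute[of z1 w1]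
          dist_triangle[of w1 "Phi w2" z1] dist_triangle[of z1 "Phi w2" "Phi z2"] dist_commute[of "Phi z2" "Phi w2"]
        by linarith
      have "dist (Xi p) (Xi q) \<le> \<bar>f (dist z1 z2) - f (dist w1 w2)\<bar>
            + \<bar>f (dist z1 (Phi z2)) - f (dist w1 (Phi w2))\<bar>"
        unfolding Xi_def pq dist_real_def by simp
      also have "\<dots> \<le> \<bar>dist z1 z2 - dist w1 w2\<bar> / d + \<bar>dist z1 (Phi z2) - dist w1 (Phi w2)\<bar> / d"
        unfolding f_def using clip_lip[OF d(1)] add_mono by blast
      also have "\<dots> \<le> 2 * dist p q / d + 2 * dist p q / d"
        using add_mono[OF divide_right_mono[OF a less_imp_le[OF d0]] divide_right_mono[OF b less_imp_le[OF d0]]] .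
      also have "\<dots> \<le> 6 / d * dist p q" using d(1) by (simp add: field_simps)
      finally show ?thesis .
    qed
  qed
  show ?thesis
  proof (intro exI conjI allI)
    show "(6 / d)-lipschitz_on UNIV Xi" by (rule lip)
    fix z1 z2
    show "Xi (z1, z2) = 1 \<longleftrightarrow> z1 = z2"
    proof
      assume h: "Xi (z1, z2) = 1"
      have "f (dist z1 z2) = 1" using h f01[of "dist z1 z2"] f01[of "dist z1 (Phi z2)"]
        unfolding Xi_def by simp
      then show "z1 = z2" using f1 by simp
    next
      assume "z1 = z2"
      then show "Xi (z1, z2) = 1" unfolding Xi_def using f1 f0[OF far[of z2]] by simp
    qed
    show "Xi (z1, z2) = -1 \<longleftrightarrow> z1 = Phi z2"
    proof
      assume h: "Xi (z1, z2) = -1"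
      have "f (dist z1 (Phi z2)) = 1" using h f01[of "dist z1 z2"] f01[of "dist z1 (Phi z2)"]
        unfolding Xi_def by simp
      then show "z1 = Phi z2" using f1 by simp
    next
      assume e: "z1 = Phi z2"
      have "dist z1 z2 \<ge> d" using far[of z2] e by (simp add: dist_commute)
      then have "f (dist z1 z2) = 0" by (rule f0)
      moreover have "f (dist z1 (Phi z2)) = 1" using e f1 by simp
      ultimately show "Xi (z1, z2) = -1" unfolding Xi_def by simp
    qed
    show "Xi (z1, z2) = Xi (Phi z1, Phi z2)"
      unfolding Xi_def using finv[of z1 z2] finv[of z1 "Phi z2"] inv by simp
  qed
qed

end
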